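(* Let $(Q,\cdot)$ and $(Q,\ast)$ be Ward quasigroups on the same set $Q$. Then the following statements are equivalent: (1) $(Q,\cdot,\ast)$ is a double magma, i.e. $(x\cdot y)\ast(z\cdot w)=(x\ast z)\cdot(y\ast w)$ for all $x,y,z,w\in Q$; (2) the operations $\cdot$ and $\ast$ coincide and $(Q,\cdot)$ is medial; (3) the operations $\cdot$ and $\ast$ coincide and $(Q,\cdot)$ is left modular; (4) the operations $\cdot$ and $\ast$ coincide and $(Q,\cdot)$ satisfies $xy\cdot z=xz\cdot y$ and $x\cdot yz=xy\cdot ez$ for all $x,y,z\in Q$, where $e$ is the element with $xx=e$ for all $x$; (5) the operations $\cdot$ and $\ast$ coincide and $(Q,\cdot)$ is induced by an abelian group, i.e. there is an abelian group $(Q,\circ)$ with $x\cdot y=x\circ y^{-1}$ for all $x,y\in Q$.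
   Context: A quasigroup is a magma $(Q,\cdot)$ in which for all $a,b\in Q$ the equations $ax=b$ and $ya=b$ have unique solutions $x,y\in Q$. A Ward quasigroup is a quasigroup $(Q,\cdot)$ satisfying $(xz)(yz)=xy$ for all $x,y,z\in Q$; in such a quasigroup there is an element $e$ with $xx=e$ for all $x\in Q$. A magma is medial if $xy\cdot zw=xz\cdot yw$ and left modular if $x\cdot yz=z\cdot yx$ for all $x,y,z,w$. Juxtaposition denotes $\cdot$, and $xy\cdot z$ means $(xy)z$. *)

theory Defs
  imports "HOL-Algebra.Group"
begin

definition closed_op :: "'a set \<Rightarrow> ('a \<Rightarrow> 'a \<Rightarrow> 'a) \<Rightarrow> bool" where
  "closed_op Q m \<longleftrightarrow> (\<forall>x\<in>Q. \<forall>y\<in>Q. m x y \<in> Q)"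

definition quasigroup :: "'a set \<Rightarrow> ('a \<Rightarrow> 'a \<Rightarrow> 'a) \<Rightarrow> bool" where
  "quasigroup Q m \<longleftrightarrow> closed_op Q m \<and>
     (\<forall>a\<in>Q. \<forall>b\<in>Q. (\<exists>!x. x \<in> Q \<and> m a x = b) \<and> (\<exists>!y. y \<in> Q \<and> m y a = b))"

definition ward_quasigroup :: "'a set \<Rightarrow> ('a \<Rightarrow> 'a \<Rightarrow> 'a) \<Rightarrow> bool" where
  "ward_quasigroup Q m \<longleftrightarrow> quasigroup Q m \<and>
     (\<forall>x\<in>Q. \<forall>y\<in>Q. \<forall>z\<in>Q. m (m x z) (m y z) = m x y)"

definition double_magma :: "'a set \<Rightarrow> ('a \<Rightarrow> 'a \<Rightarrow> 'a) \<Rightarrow> ('a \<Rightarrow> 'a \<Rightarrow> 'a) \<Rightarrow> bool" where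
  "double_magma Q m s \<longleftrightarrow>
     (\<forall>x\<in>Q. \<forall>y\<in>Q. \<forall>z\<in>Q. \<forall>w\<in>Q. s (m x y) (m z w) = m (s x z) (s y w))"

definition medial :: "'a set \<Rightarrow> ('a \<Rightarrow> 'a \<Rightarrow> 'a) \<Rightarrow> bool" where
  "medial Q m \<longleftrightarrow>
     (\<forall>x\<in>Q. \<forall>y\<in>Q. \<forall>z\<in>Q. \<forall>w\<in>Q. m (m x y) (m z w) = m (m x z) (m y w))"

definition left_modular :: "'a set \<Rightarrow> ('a \<Rightarrow> 'a \<Rightarrow> 'a) \<Rightarrow> bool" where
  "left_modular Q m \<longleftrightarrow> (\<forall>x\<in>Q. \<forall>y\<in>Q. \<forall>z\<in>Q. m x (m y z) = m z (m y x))"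

definition induced_by_abelian_group :: "'a set \<Rightarrow> ('a \<Rightarrow> 'a \<Rightarrow> 'a) \<Rightarrow> bool" where
  "induced_by_abelian_group Q m \<longleftrightarrow>
     (\<exists>G :: 'a monoid. comm_group G \<and> carrier G = Q \<and>
        (\<forall>x\<in>Q. \<forall>y\<in>Q. m x y = x \<otimes>\<^bsub>G\<^esub> inv\<^bsub>G\<^esub> y))"

end

theory Submission
  imports Defs
begin

locale ward =
  fixes Q :: "'a set" and m :: "'a \<Rightarrow> 'a \<Rightarrow> 'a"
  assumes W: "ward_quasigroup Q m" and ne: "Q \<noteq> {}"
begin

lemma cl: "x \<in> Q \<Longrightarrow> y \<in> Q \<Longrightarrow> m x y \<in> Q"
  using W unfolding ward_quasigroup_def quasigroup_def closed_op_def by blast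

lemma lcancel: "a \<in> Q \<Longrightarrow> x \<in> Q \<Longrightarrow> y \<in> Q \<Longrightarrow> m a x = m a y \<Longrightarrow> x = y"
  using W cl unfolding ward_quasigroup_def quasigroup_def by metis

lemma ldiv: "a \<in> Q \<Longrightarrow> b \<in> Q \<Longrightarrow> \<exists>x\<in>Q. m a x = b"
  using W unfolding ward_quasigroup_def quasigroup_def by blast

lemma wl: "x \<in> Q \<Longrightarrow> y \<in> Q \<Longrightarrow> z \<in> Q \<Longrightarrow> m (m x z) (m y z) = m x y"
  using W unfolding ward_quasigroup_def by blast

definition x0 where "x0 = (SOME x. x \<in> Q)"
lemma x0: "x0 \<in> Q" using ne unfolding x0_def by (simp add: some_in_eq)

definition e where "e = m x0 x0"
lemma eQ: "e \<in> Q" using x0 cl e_def by simp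

lemma sq: "x \<in> Q \<Longrightarrow> m x x = e"
proof -
  assume x: "x \<in> Q"
  obtain z where z: "z \<in> Q" "m x0 z = x" using ldiv[OF x0 x] by blast
  show ?thesis using wl[OF x0 x0 z(1)] z e_def by simp
qed

lemma re: "u \<in> Q \<Longrightarrow> m u e = u"
proof -
  assume u: "u \<in> Q"
  obtain z where z: "z \<in> Q" "m x0 z = u" using ldiv[OF x0 u] by blast
  show ?thesis using wl[OF x0 z(1) z(1)] z sq by simp
qed

lemma F3: "y \<in> Q \<Longrightarrow> z \<in> Q \<Longrightarrow> m e (m y z) = m z y"
  using wl[of z y z] sq by simp

lemma F4: "u \<in> Q \<Longrightarrow> m e (m e u) = u"
proof -
  assume u: "u \<in> Q"
  obtain z where z: "z \<in> Q" "m x0 z = u" using ldiv[OF x0 u] by blast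
  show ?thesis using z F3 x0 cl by metis
qed

lemma L1: "x \<in> Q \<Longrightarrow> y \<in> Q \<Longrightarrow> z \<in> Q \<Longrightarrow> m (m x y) z = m x (m z (m e y))"
proof -
  assume x: "x \<in> Q" and y: "y \<in> Q" and z: "z \<in> Q"
  define y' where "y' = m e y"
  have y': "y' \<in> Q" using y eQ cl y'_def by simp
  have a: "m e y' = y" using F4 y y'_def by simp
  have "m x (m z y') = m (m x (m e y')) (m (m z y') (m e y'))"
    using wl[OF x cl[OF z y'] cl[OF eQ y']] by simp
  also have "m (m z y') (m e y') = z" using wl[OF z eQ y'] re z by simp
  finally show ?thesis using a y'_def by simp
qed

definition G :: "'a monoid" where
  "G = \<lparr>carrier = Q, mult = (\<lambda>x y. m x (m e y)), one = e\<rparr>"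

definition ab where "ab \<longleftrightarrow> (\<forall>x\<in>Q. \<forall>y\<in>Q. m x (m e y) = m y (m e x))"

lemma assoc: "x \<in> Q \<Longrightarrow> y \<in> Q \<Longrightarrow> z \<in> Q \<Longrightarrow>
   m (m x (m e y)) (m e z) = m x (m e (m y (m e z)))"
  using L1 F3 F4 eQ cl by metis

lemma cG: "ab \<Longrightarrow> comm_group G"
  apply (rule comm_groupI)
  apply (simp_all add: G_def cl eQ assoc)
  apply (simp add: ab_def)
  apply (simp add: F4)
  by (metis F4 cl eQ sq)

lemma invG: "ab \<Longrightarrow> y \<in> Q \<Longrightarrow> inv\<^bsub>G\<^esub> y = m e y"
proof -
  assume ab: ab and y: "y \<in> Q"
  interpret comm_group G by (rule cG[OF ab])
  show ?thesis
    by (rule inv_equality) (simp_all add: G_def y cl eQ F4 sq)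
qed

lemma mG: "ab \<Longrightarrow> x \<in> Q \<Longrightarrow> y \<in> Q \<Longrightarrow> m x y = x \<otimes>\<^bsub>G\<^esub> inv\<^bsub>G\<^esub> y"
  using invG by (simp add: G_def F4)

lemma ab_induced: "ab \<Longrightarrow> induced_by_abelian_group Q m"
  unfolding induced_by_abelian_group_def
  by (rule exI[of _ G]) (simp add: cG mG, simp add: G_def)

lemma induced_lm: "induced_by_abelian_group Q m \<Longrightarrow> left_modular Q m"
proof -
  assume "induced_by_abelian_group Q m"
  then obtain H :: "'a monoid" where H: "comm_group H" "carrier H = Q"
    "\<forall>x\<in>Q. \<forall>y\<in>Q. m x y = x \<otimes>\<^bsub>H\<^esub> inv\<^bsub>H\<^esub> y"
    unfolding induced_by_abelian_group_def by blast
  interpret comm_group H by (rule H(1))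
  show ?thesis unfolding left_modular_def
  proof (intro ballI)
    fix x y z assume xyz: "x \<in> Q" "y \<in> Q" "z \<in> Q"
    then have c: "x \<in> carrier H" "y \<in> carrier H" "z \<in> carrier H" using H(2) by auto
    have "m x (m y z) = x \<otimes>\<^bsub>H\<^esub> inv\<^bsub>H\<^esub> (y \<otimes>\<^bsub>H\<^esub> inv\<^bsub>H\<^esub> z)"
      using H(3) xyz cl by simp
    also have "\<dots> = z \<otimes>\<^bsub>H\<^esub> inv\<^bsub>H\<^esub> (y \<otimes>\<^bsub>H\<^esub> inv\<^bsub>H\<^esub> x)"
      using c by (simp add: inv_mult m_ac)
    also have "\<dots> = m z (m y x)" using H(3) xyz cl by simp
    finally show "m x (m y z) = m z (m y x)" .
  qed
qed

lemma lm_ab: "left_modular Q m \<Longrightarrow> ab"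
  unfolding left_modular_def ab_def using eQ by blast

lemma ab_from_swap: "(\<forall>y\<in>Q. \<forall>z\<in>Q. m (m e y) z = m (m e z) y) \<Longrightarrow> ab"
  unfolding ab_def
proof (intro ballI)
  fix x y assume h: "\<forall>y\<in>Q. \<forall>z\<in>Q. m (m e y) z = m (m e z) y" and xy: "x \<in> Q" "y \<in> Q"
  have "m (m e (m e x)) (m e y) = m (m e (m e y)) (m e x)"
    using h xy eQ cl by blast
  then show "m x (m e y) = m y (m e x)" using F4 xy by simp
qed

lemma medial_ab: "medial Q m \<Longrightarrow> ab"
proof -
  assume md: "medial Q m"
  show ab
  proof (rule ab_from_swap, intro ballI)
    fix y z assume yz: "y \<in> Q" "z \<in> Q"
    have "m (m e y) (m z e) = m (m e z) (m y e)"
      using md eQ yz unfolding medial_def by blast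
    then show "m (m e y) z = m (m e z) y" using re yz by simp
  qed
qed

lemma ab_medial: "ab \<Longrightarrow> medial Q m"
proof -
  assume ab: ab
  interpret comm_group G by (rule cG[OF ab])
  have c: "carrier G = Q" by (simp add: G_def)
  have mG': "\<And>x y. x \<in> carrier G \<Longrightarrow> y \<in> carrier G \<Longrightarrow> m x y = x \<otimes>\<^bsub>G\<^esub> inv\<^bsub>G\<^esub> y"
    unfolding c by (rule mG[OF ab])
  show ?thesis unfolding medial_def
  proof (intro ballI)
    fix x y z w assume "x \<in> Q" "y \<in> Q" "z \<in> Q" "w \<in> Q"
    then have "x \<in> carrier G" "y \<in> carrier G" "z \<in> carrier G" "w \<in> carrier G" using c by auto
    then show "m (m x y) (m z w) = m (m x z) (m y w)"
      apply (simp add: mG' inv_mult)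
      by (simp add: m_ac)
  qed
qed

lemma ab_econd: "ab \<Longrightarrow> (\<forall>x\<in>Q. \<forall>y\<in>Q. \<forall>z\<in>Q. m (m x y) z = m (m x z) y \<and>
                                   m x (m y z) = m (m x y) (m e z))"
proof -
  assume ab: ab
  interpret comm_group G by (rule cG[OF ab])
  have c: "carrier G = Q" by (simp add: G_def)
  have ee: "e = \<one>\<^bsub>G\<^esub>" by (simp add: G_def)
  have eG: "e \<in> carrier G" using eQ c by simp
  have mG': "\<And>x y. x \<in> carrier G \<Longrightarrow> y \<in> carrier G \<Longrightarrow> m x y = x \<otimes>\<^bsub>G\<^esub> inv\<^bsub>G\<^esub> y"
    unfolding c by (rule mG[OF ab])
  show ?thesis
  proof (intro ballI)
    fix x y z assume "x \<in> Q" "y \<in> Q" "z \<in> Q"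
    then have "x \<in> carrier G" "y \<in> carrier G" "z \<in> carrier G" using c by auto
    then show "m (m x y) z = m (m x z) y \<and> m x (m y z) = m (m x y) (m e z)"
      apply (simp add: mG' inv_mult eG)
      by (simp add: m_ac ee)
  qed
qed

end

theorem theorem3p1:
  fixes Q :: "'a set" and m s :: "'a \<Rightarrow> 'a \<Rightarrow> 'a"
  assumes nonempty: "Q \<noteq> {}"
    and wm: "ward_quasigroup Q m"
    and ws: "ward_quasigroup Q s"
  defines "coincide \<equiv> (\<forall>x\<in>Q. \<forall>y\<in>Q. m x y = s x y)"
  shows "(double_magma Q m s \<longleftrightarrow> coincide \<and> medial Q m)
    \<and> (coincide \<and> medial Q m \<longleftrightarrow> coincide \<and> left_modular Q m)
    \<and> (coincide \<and> left_modular Q m \<longleftrightarrow>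
         coincide \<and> (\<exists>e\<in>Q. (\<forall>x\<in>Q. m x x = e) \<and>
            (\<forall>x\<in>Q. \<forall>y\<in>Q. \<forall>z\<in>Q. m (m x y) z = m (m x z) y \<and>
                                   m x (m y z) = m (m x y) (m e z))))
    \<and> (coincide \<and> left_modular Q m \<longleftrightarrow> coincide \<and> induced_by_abelian_group Q m)"
proof -
  interpret M: ward Q m using wm nonempty by unfold_locales
  interpret S: ward Q s using ws nonempty by unfold_locales
  have eqe: "S.e = M.e" if "double_magma Q m s"
  proof -
    have "s (m M.x0 M.x0) (m M.x0 M.x0) = m (s M.x0 M.x0) (s M.x0 M.x0)"
      using that M.x0 unfolding double_magma_def by blast
    then show ?thesis using M.sq S.sq M.x0 M.eQ S.eQ by simp
  qed
  have dm_co: "coincide" if dm: "double_magma Q m s"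
    unfolding coincide_def
  proof (intro ballI)
    fix x y assume xy: "x \<in> Q" "y \<in> Q"
    have "s (m x y) (m x x) = m (s x x) (s y x)"
      using dm xy M.eQ unfolding double_magma_def by blast
    then have "m x y = m M.e (s y x)"
      using M.sq S.sq S.re eqe[OF dm] xy M.eQ M.cl by simp
    then have "m M.e (m y x) = m M.e (s y x)" using M.F3 xy by simp
    then show "m y x = s y x" using M.lcancel[OF M.eQ M.cl[OF xy(2) xy(1)] S.cl[OF xy(2) xy(1)]] by simp
  qed
  have A: "double_magma Q m s \<longleftrightarrow> coincide \<and> medial Q m"
  proof
    assume dm: "double_magma Q m s"
    have co: coincide by (rule dm_co[OF dm])
    have "medial Q m" unfolding medial_def
    proof (intro ballI)
      fix x y z w assume q: "x \<in> Q" "y \<in> Q" "z \<in> Q" "w \<in> Q"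
      have "s (m x y) (m z w) = m (s x z) (s y w)" using dm q unfolding double_magma_def by blast
      moreover have "s (m x y) (m z w) = m (m x y) (m z w)" using co q M.cl unfolding coincide_def by simp
      moreover have "s x z = m x z" "s y w = m y w" using co q unfolding coincide_def by auto
      ultimately show "m (m x y) (m z w) = m (m x z) (m y w)" by simp
    qed
    with co show "coincide \<and> medial Q m" by simp
  next
    assume h: "coincide \<and> medial Q m"
    show "double_magma Q m s" unfolding double_magma_def
    proof (intro ballI)
      fix x y z w assume q: "x \<in> Q" "y \<in> Q" "z \<in> Q" "w \<in> Q"
      have "m (m x y) (m z w) = m (m x z) (m y w)" using h q unfolding medial_def by blast
      moreover have "s (m x y) (m z w) = m (m x y) (m z w)" using h q M.cl unfolding coincide_def by simp
      moreover have "s x z = m x z" "s y w = m y w" using h q unfolding coincide_def by auto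
      ultimately show "s (m x y) (m z w) = m (s x z) (s y w)" by simp
    qed
  qed
  have B: "medial Q m \<longleftrightarrow> left_modular Q m"
    using M.medial_ab M.ab_medial M.lm_ab M.ab_induced M.induced_lm by blast
  have C: "left_modular Q m \<longleftrightarrow> (\<exists>e\<in>Q. (\<forall>x\<in>Q. m x x = e) \<and>
            (\<forall>x\<in>Q. \<forall>y\<in>Q. \<forall>z\<in>Q. m (m x y) z = m (m x z) y \<and>
                                   m x (m y z) = m (m x y) (m e z)))"
  proof
    assume "left_modular Q m"
    then show "\<exists>e\<in>Q. (\<forall>x\<in>Q. m x x = e) \<and>
            (\<forall>x\<in>Q. \<forall>y\<in>Q. \<forall>z\<in>Q. m (m x y) z = m (m x z) y \<and>
                                   m x (m y z) = m (m x y) (m e z))"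
      using M.lm_ab M.ab_econd M.eQ M.sq by blast
  next
    assume "\<exists>e\<in>Q. (\<forall>x\<in>Q. m x x = e) \<and>
            (\<forall>x\<in>Q. \<forall>y\<in>Q. \<forall>z\<in>Q. m (m x y) z = m (m x z) y \<and>
                                   m x (m y z) = m (m x y) (m e z))"
    then obtain e where e: "e \<in> Q" "\<forall>x\<in>Q. m x x = e"
      "\<forall>x\<in>Q. \<forall>y\<in>Q. \<forall>z\<in>Q. m (m x y) z = m (m x z) y" by blast
    have "e = M.e" using e M.sq M.eQ by metis
    then have "\<forall>y\<in>Q. \<forall>z\<in>Q. m (m M.e y) z = m (m M.e z) y" using e(3) M.eQ by blast
    then have "M.ab" by (rule M.ab_from_swap)
    then show "left_modular Q m" using M.ab_induced M.induced_lm by blast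
  qed
  have D: "left_modular Q m \<longleftrightarrow> induced_by_abelian_group Q m"
    using M.lm_ab M.ab_induced M.induced_lm by blast
  show ?thesis using A B C D by blast
qed

end
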